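(* Assume $L$ satisfies (L1),(L2) and $W$ satisfies (W1)–(W6) (as in the context). Then there exist $\alpha,\varrho>0$ such that $I(u)\ge\alpha$ for all $u\in S=\{u\in E^+:\|u\|=\varrho\}$.
   Context: $L\in C(\mathbb{R},\mathbb{R}^{N\times N})$ symmetric-matrix valued, $W\in C^1(\mathbb{R}\times\mathbb{R}^N,\mathbb{R})$, $\nabla W$ the gradient in $x$, $\widetilde W(t,x)=2W(t,x)-(\nabla W(t,x),x)$, $l(t)=\min_{|x|=1}(L(t)x,x)$. (L1): $\exists\,\alpha_0>1,M>0$ with $\lim_{R\to\infty}\operatorname{meas}\{t:|t|\ge R,\ l(t)\le M|t|\ln^{\alpha_0}|t|\}=0$. (L2): $\exists L_0>0$ with $(L(t)x,x)\ge-L_0|x|^2$. $\mathcal{H}$ is the self-adjoint extension in $L^2(\mathbb{R},\mathbb{R}^N)$ of $-\frac{d^2}{dt^2}+L(t)$, with eigenvalues $\lambda_1\le\lambda_2\le\cdots\to\infty$; $\bar n$ is the number of nonpositive eigenvalues. $E=\mathfrak{D}(|\mathcal{H}|^{1/2})$, $E=E^-\oplus E^0\oplus E^+$ (spans of eigenfunctions with negative, zero, positive eigenvalues), norm $\|u\|^2=\||\mathcal{H}|^{1/2}u\|_{L^2}^2+\|u^0\|_{L^2}^2$. $I(u)=\frac12\|u^+\|^2-\frac12\|u^-\|^2-\int_{\mathbb{R}}W(t,u(t))\,dt$. (W1) $W(t,0)=0$, $|\nabla W(t,x)|\le b_1|x|$. (W2) $\widetilde W(t,x)\ge b_2|x|^\mu$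 for $|x|\ge r_1$, with $b_2,r_1>0,\mu>1$. (W3) $\widetilde W(t,x)\ge-b_3|x|$ for $|x|<r_1$, $b_3>0$. (W4) $|W(t,x)|\le\frac{\lambda_{\bar n+1}-\sigma_0}{2}|x|^2$ for $|x|\le r_2$, $r_2,\sigma_0>0$. (W5) $W(t,x)\ge(\frac{\lambda_{\bar n+1}}2+\varepsilon_0)|x|^2$ for $|x|\ge r_\infty$, $\varepsilon_0,r_\infty>0$. (W6) $W\ge0$. All for all $t\in\mathbb{R}$. *)

theory Defs
  imports "HOL-Analysis.Analysis"
begin

text \<open>Functions \<real> \<rightarrow> \<real>^N are modelled as real \<Rightarrow> real^'n, N = CARD('n).\<close>

definition L2 :: "(real \<Rightarrow> real^'n) set" where
  "L2 = {u. u \<in> borel_measurable lebesgue \<and> integrable lebesgue (\<lambda>t. (norm (u t))\<^sup>2)}"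

definition l2_inner :: "(real \<Rightarrow> real^'n) \<Rightarrow> (real \<Rightarrow> real^'n) \<Rightarrow> real" where
  "l2_inner u v = (\<integral>t. u t \<bullet> v t \<partial>lebesgue)"

definition lmin :: "(real \<Rightarrow> real^'n^'n) \<Rightarrow> real \<Rightarrow> real" where
  "lmin L t = Inf {(L t *v x) \<bullet> x | x. norm x = 1}"

text \<open>u is an eigenfunction of H = -d^2/dt^2 + L(t) with eigenvalue lam: a (C^2) L^2 solution
  of -u'' + L(t)u = lam u. (Since L is bounded below, the minimal operator is essentially
  self-adjoint and H is the maximal operator.)\<close>
definition is_eigenfun :: "(real \<Rightarrow> real^'n^'n) \<Rightarrow> real \<Rightarrow> (real \<Rightarrow> real^'n) \<Rightarrow> bool" where
  "is_eigenfun L lam u \<longleftrightarrow> u \<in> L2 \<and>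
     (\<exists>u' u''. \<forall>t. (u has_vector_derivative u' t) (at t) \<and>
                    (u' has_vector_derivative u'' t) (at t) \<and>
                    - u'' t + L t *v u t = lam *\<^sub>R u t)"

text \<open>(e k, lam k) is an orthonormal basis of L^2 consisting of eigenfunctions of H,
  eigenvalues listed in nondecreasing order with multiplicity (0-indexed: lam 0 = lambda_1).\<close>
definition eigen_onb :: "(real \<Rightarrow> real^'n^'n) \<Rightarrow> (nat \<Rightarrow> real) \<Rightarrow> (nat \<Rightarrow> real \<Rightarrow> real^'n) \<Rightarrow> bool" where
  "eigen_onb L lam e \<longleftrightarrow> mono lam \<and> (\<forall>k. is_eigenfun L (lam k) (e k)) \<and>
     (\<forall>j k. l2_inner (e j) (e k) = (if j = k then 1 else 0)) \<and>
     (\<forall>u\<in>L2. (\<lambda>k. (l2_inner u (e k))\<^sup>2) sums l2_inner u u)"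

text \<open>nbar = number of nonpositive eigenvalues; lambda_{nbar+1} is lam nbar (0-indexed).\<close>
definition nbar :: "(nat \<Rightarrow> real) \<Rightarrow> nat" where
  "nbar lam = card {k. lam k \<le> 0}"

definition Espace :: "(nat \<Rightarrow> real) \<Rightarrow> (nat \<Rightarrow> real \<Rightarrow> real^'n) \<Rightarrow> (real \<Rightarrow> real^'n) set" where
  "Espace lam e = {u \<in> L2. summable (\<lambda>k. \<bar>lam k\<bar> * (l2_inner u (e k))\<^sup>2)}"

definition Eplus :: "(nat \<Rightarrow> real) \<Rightarrow> (nat \<Rightarrow> real \<Rightarrow> real^'n) \<Rightarrow> (real \<Rightarrow> real^'n) set" where
  "Eplus lam e = {u \<in> Espace lam e. \<forall>k. lam k \<le> 0 \<longrightarrow> l2_inner u (e k) = 0}"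

text \<open>||u||^2 = || |H|^{1/2} u ||^2_{L^2} + ||u^0||^2_{L^2}.\<close>
definition Enorm :: "(nat \<Rightarrow> real) \<Rightarrow> (nat \<Rightarrow> real \<Rightarrow> real^'n) \<Rightarrow> (real \<Rightarrow> real^'n) \<Rightarrow> real" where
  "Enorm lam e u = sqrt (\<Sum>k. (if lam k = 0 then 1 else \<bar>lam k\<bar>) * (l2_inner u (e k))\<^sup>2)"

definition Ifun :: "(nat \<Rightarrow> real) \<Rightarrow> (nat \<Rightarrow> real \<Rightarrow> real^'n) \<Rightarrow> (real \<Rightarrow> real^'n \<Rightarrow> real)
                    \<Rightarrow> (real \<Rightarrow> real^'n) \<Rightarrow> real" where
  "Ifun lam e W u =
     (1/2) * (\<Sum>k. (if lam k > 0 then lam k else 0) * (l2_inner u (e k))\<^sup>2)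
   - (1/2) * (\<Sum>k. (if lam k < 0 then - lam k else 0) * (l2_inner u (e k))\<^sup>2)
   - (\<integral>t. W t (u t) \<partial>lebesgue)"

end

theory Submission
  imports Defs
begin


lemma hk_le_leb:
  fixes h :: "real \<Rightarrow> real"
  assumes "integrable lebesgue h" "\<And>x. h x \<ge> 0"
  shows "h integrable_on {a..b}" "integral {a..b} h \<le> integral\<^sup>L lebesgue h"
proof -
  have si: "set_integrable lebesgue {a..b} h"
    unfolding set_integrable_def by (rule integrable_mult_indicator) (use assms in auto)
  show "h integrable_on {a..b}" using set_lebesgue_integral_eq_integral(1)[OF si] .
  have "integral {a..b} h = (LINT x:{a..b}|lebesgue. h x)"
    using set_lebesgue_integral_eq_integral(2)[OF si] by simp
  also have "\<dots> = (\<integral>x. indicator {a..b} x *\<^sub>R h x \<partial>lebesgue)" by (simp add: set_lebesgue_integral_def)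
  also have "\<dots> \<le> integral\<^sup>L lebesgue h"
    apply (rule integral_mono[OF si[unfolded set_integrable_def] assms(1)])
    using assms(2) by (auto simp: indicator_def)
  finally show "integral {a..b} h \<le> integral\<^sup>L lebesgue h" .
qed

lemma hk_tail:
  fixes h :: "real \<Rightarrow> real"
  assumes h: "integrable lebesgue h" and d: "\<delta> > 0"
  shows "\<exists>n::real. \<forall>a b. a \<le> -n \<longrightarrow> n \<le> b \<longrightarrow> \<bar>integral {a..b} h - integral\<^sup>L lebesgue h\<bar> \<le> \<delta>"
proof -
  have ah: "integrable lebesgue (\<lambda>x. \<bar>h x\<bar>)" using h by auto
  have lim: "(\<lambda>n::nat. \<integral>x. indicator {-real n..real n} x *\<^sub>R \<bar>h x\<bar> \<partial>lebesgue) \<longlonglongrightarrow> (\<integral>x. \<bar>h x\<bar> \<partial>lebesgue)"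
  proof (rule integral_dominated_convergence[where w="\<lambda>x. \<bar>h x\<bar>"])
    show "(\<lambda>x. \<bar>h x\<bar>) \<in> borel_measurable lebesgue" using ah by auto
    show "(\<lambda>x. indicator {-real n..real n} x *\<^sub>R \<bar>h x\<bar>) \<in> borel_measurable lebesgue" for n
      using integrable_mult_indicator[OF _ ah, of "{-real n..real n}"] by auto
    show "integrable lebesgue (\<lambda>x. \<bar>h x\<bar>)" by fact
    show "AE x in lebesgue. (\<lambda>n. indicator {-real n..real n} x *\<^sub>R \<bar>h x\<bar>) \<longlonglongrightarrow> \<bar>h x\<bar>"
    proof (rule AE_I2)
      fix x :: real
      obtain N :: nat where N: "\<bar>x\<bar> \<le> real N" using real_arch_simple by blast
      have "eventually (\<lambda>n. indicator {-real n..real n} x *\<^sub>R \<bar>h x\<bar> = \<bar>h x\<bar>) sequentially"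
        unfolding eventually_sequentially
        by (rule exI[of _ N]) (use N in \<open>auto simp: indicator_def\<close>)
      then show "(\<lambda>n. indicator {-real n..real n} x *\<^sub>R \<bar>h x\<bar>) \<longlonglongrightarrow> \<bar>h x\<bar>"
        by (rule tendsto_eventually)
    qed
    show "AE x in lebesgue. norm (indicator {-real n..real n} x *\<^sub>R \<bar>h x\<bar>) \<le> \<bar>h x\<bar>" for n
      by (auto simp: indicator_def)
  qed
  then obtain N where N: "\<And>n. n \<ge> N \<Longrightarrow> dist (\<integral>x. indicator {-real n..real n} x *\<^sub>R \<bar>h x\<bar> \<partial>lebesgue) (\<integral>x. \<bar>h x\<bar> \<partial>lebesgue) < \<delta>"
    using d unfolding lim_sequentially by blast
  show ?thesis
  proof (intro exI[of _ "real N"] allI impI)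
    fix a b :: real assume ab: "a \<le> - real N" "real N \<le> b"
    have si: "set_integrable lebesgue {a..b} h"
      unfolding set_integrable_def by (rule integrable_mult_indicator) (use assms in auto)
    have i1: "integral {a..b} h = (\<integral>x. indicator {a..b} x *\<^sub>R h x \<partial>lebesgue)"
      using set_lebesgue_integral_eq_integral(2)[OF si] by (simp add: set_lebesgue_integral_def)
    have iN: "integrable lebesgue (\<lambda>x. indicator {-real N..real N} x *\<^sub>R \<bar>h x\<bar>)"
      by (rule integrable_mult_indicator) (use ah in auto)
    have "\<bar>integral {a..b} h - integral\<^sup>L lebesgue h\<bar> = \<bar>\<integral>x. h x - indicator {a..b} x *\<^sub>R h x \<partial>lebesgue\<bar>"
      unfolding i1 using si h by (simp add: set_integrable_def)
    also have "\<dots> \<le> (\<integral>x. \<bar>h x\<bar> - indicator {-real N..real N} x *\<^sub>R \<bar>h x\<bar> \<partial>lebesgue)"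
      apply (rule integral_abs_bound_integral)
      using si h iN ah ab by (auto simp: set_integrable_def indicator_def)
    also have "\<dots> = (\<integral>x. \<bar>h x\<bar> \<partial>lebesgue) - (\<integral>x. indicator {-real N..real N} x *\<^sub>R \<bar>h x\<bar> \<partial>lebesgue)"
      using iN ah by simp
    also have "\<dots> \<le> \<delta>" using N[of N] by (simp add: dist_real_def)
    finally show "\<bar>integral {a..b} h - integral\<^sup>L lebesgue h\<bar> \<le> \<delta>" .
  qed
qed



lemma exists_right:
  fixes g g' :: "real \<Rightarrow> real"
  assumes der: "\<And>x. (g has_real_derivative g' x) (at x)" and nn: "\<And>x. g x \<ge> 0"
    and int: "integrable lebesgue g" and d: "\<delta> > 0"
  shows "\<exists>b\<ge>B. g' b \<le> \<delta>"
proof (rule ccontr)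
  assume "\<not> ?thesis"
  then have gt: "\<And>b. b \<ge> B \<Longrightarrow> g' b > \<delta>" by force
  have grow: "g x \<ge> \<delta> * (x - B)" if "x \<ge> B" for x
  proof -
    have "g B - \<delta> * B \<le> g x - \<delta> * x"
      apply (rule DERIV_nonneg_imp_nondecreasing[OF that])
      subgoal for y using gt[of y] by (intro exI[of _ "g' y - \<delta>"]) (auto intro!: derivative_eq_intros der)
      done
    then show ?thesis using nn[of B] by (simp add: algebra_simps)
  qed
  define P where "P = integral\<^sup>L lebesgue g"
  have P0: "P \<ge> 0" unfolding P_def using nn by simp
  define c where "c = B + (P + 1) / \<delta>"
  have cB: "c \<ge> B" unfolding c_def using P0 d by simp
  have "\<delta> * (c - B) = P + 1" unfolding c_def using d by simp
  then have low: "\<And>x. x \<in> {c..c+1} \<Longrightarrow> P + 1 \<le> g x" using grow cB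
    by (metis atLeastAtMost_iff dual_order.trans less_eq_real_def mult_le_cancel_left_pos d diff_right_mono)
  have "P + 1 = integral {c..c+1} (\<lambda>x. P + 1)" by simp
  also have "\<dots> \<le> integral {c..c+1} g"
    by (rule integral_le) (use low hk_le_leb(1)[OF int nn] in auto)
  also have "\<dots> \<le> P" unfolding P_def by (rule hk_le_leb(2)[OF int nn])
  finally show False by simp
qed

lemma exists_left:
  fixes g g' :: "real \<Rightarrow> real"
  assumes der: "\<And>x. (g has_real_derivative g' x) (at x)" and nn: "\<And>x. g x \<ge> 0"
    and int: "integrable lebesgue g" and d: "\<delta> > 0"
  shows "\<exists>a\<le>A. g' a \<ge> - \<delta>"
proof (rule ccontr)
  assume "\<not> ?thesis"
  then have gt: "\<And>b. b \<le> A \<Longrightarrow> g' b < - \<delta>" by force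
  have grow: "g x \<ge> \<delta> * (A - x)" if "x \<le> A" for x
  proof -
    have "- g x - \<delta> * x \<le> - g A - \<delta> * A"
      apply (rule DERIV_nonneg_imp_nondecreasing[OF that])
      subgoal for y using gt[of y] by (intro exI[of _ "- g' y - \<delta>"]) (auto intro!: derivative_eq_intros der)
      done
    then show ?thesis using nn[of A] by (simp add: algebra_simps)
  qed
  define P where "P = integral\<^sup>L lebesgue g"
  have P0: "P \<ge> 0" unfolding P_def using nn by simp
  define c where "c = A - (P + 1) / \<delta>"
  have cB: "c \<le> A" unfolding c_def using P0 d by simp
  have "\<delta> * (A - c) = P + 1" unfolding c_def using d by simp
  then have low: "\<And>x. x \<in> {c-1..c} \<Longrightarrow> P + 1 \<le> g x" using grow cB
    by (metis atLeastAtMost_iff dual_order.trans less_eq_real_def mult_le_cancel_left_pos d diff_left_mono)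
  have "P + 1 = integral {c-1..c} (\<lambda>x. P + 1)" by simp
  also have "\<dots> \<le> integral {c-1..c} g"
    by (rule integral_le) (use low hk_le_leb(1)[OF int nn] in auto)
  also have "\<dots> \<le> P" unfolding P_def by (rule hk_le_leb(2)[OF int nn])
  finally show False by simp
qed

lemma exists_mean:
  fixes g :: "real \<Rightarrow> real"
  assumes nn: "\<And>x. g x \<ge> 0" and int: "integrable lebesgue g" and d: "\<delta> > 0"
  shows "\<exists>s\<in>{t-1..t}. g s \<le> integral\<^sup>L lebesgue g + \<delta>"
proof (rule ccontr)
  assume "\<not> ?thesis"
  then have low: "\<And>x. x \<in> {t-1..t} \<Longrightarrow> integral\<^sup>L lebesgue g + \<delta> \<le> g x" by force
  have "integral\<^sup>L lebesgue g + \<delta> = integral {t-1..t} (\<lambda>x. integral\<^sup>L lebesgue g + \<delta>)" by simp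
  also have "\<dots> \<le> integral {t-1..t} g"
    by (rule integral_le) (use low hk_le_leb(1)[OF int nn] in auto)
  also have "\<dots> \<le> integral\<^sup>L lebesgue g" by (rule hk_le_leb(2)[OF int nn])
  finally show False using d by simp
qed



lemma leb_integrable_on:
  fixes h :: "real \<Rightarrow> real"
  assumes "integrable lebesgue h"
  shows "h integrable_on {a..b}"
proof -
  have si: "set_integrable lebesgue {a..b} h"
    unfolding set_integrable_def by (rule integrable_mult_indicator) (use assms in auto)
  show ?thesis using set_lebesgue_integral_eq_integral(1)[OF si] .
qed

lemma inner_real_deriv:
  fixes v w :: "real \<Rightarrow> 'a::real_inner"
  assumes "(v has_vector_derivative v') (at t)" "(w has_vector_derivative w') (at t)"
  shows "((\<lambda>x. v x \<bullet> w x) has_real_derivative (v' \<bullet> w t + v t \<bullet> w')) (at t)"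
  using has_derivative_inner[OF assms[unfolded has_vector_derivative_def]]
  unfolding has_field_derivative_def
  by (rule has_derivative_eq_rhs) (auto simp: algebra_simps inner_add_right inner_add_left fun_eq_iff)

lemma cont_of_vd:
  assumes "\<And>t. (v has_vector_derivative v' t) (at t)"
  shows "continuous_on S v"
  using assms by (meson continuous_at_imp_continuous_on has_vector_derivative_continuous)

lemma core:
  fixes v v' v'' f :: "real \<Rightarrow> 'a::euclidean_space"
  assumes d1: "\<And>t. (v has_vector_derivative v' t) (at t)"
    and d2: "\<And>t. (v' has_vector_derivative v'' t) (at t)"
    and ineq: "\<And>t. - (v'' t \<bullet> v t) \<le> L0 * (norm (v t))\<^sup>2 + f t \<bullet> v t"
    and iv: "integrable lebesgue (\<lambda>t. (norm (v t))\<^sup>2)"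
    and ifv: "integrable lebesgue (\<lambda>t. f t \<bullet> v t)"
    and L0: "L0 \<ge> 0"
  shows "(norm (v t))\<^sup>2 \<le> (2 + L0) * (\<integral>t. (norm (v t))\<^sup>2 \<partial>lebesgue) + (\<integral>t. f t \<bullet> v t \<partial>lebesgue)"
proof -
  define g where "g = (\<lambda>t. (norm (v t))\<^sup>2)"
  define P where "P = (\<integral>t. g t \<partial>lebesgue)"
  define Q where "Q = (\<integral>t. f t \<bullet> v t \<partial>lebesgue)"
  have geq: "g = (\<lambda>t. v t \<bullet> v t)" unfolding g_def by (simp add: power2_norm_eq_inner)
  have gder: "(g has_real_derivative (2 * (v x \<bullet> v' x))) (at x)" for x
    unfolding geq using inner_real_deriv[OF d1 d1, of x] by (simp add: inner_commute)
  have gnn: "\<And>x. g x \<ge> 0" unfolding g_def by simp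
  have gint: "integrable lebesgue g" using iv unfolding g_def .
  have contv: "continuous_on S v" for S using cont_of_vd[OF d1] .
  have contv': "continuous_on S v'" for S using cont_of_vd[OF d2] .
  have intv': "(\<lambda>x. (norm (v' x))\<^sup>2) integrable_on {a..b}" for a b
    by (rule integrable_continuous_interval) (intro continuous_intros contv')
  have main: "g t \<le> (2 + L0) * P + Q + 6 * \<delta>" if d: "\<delta> > 0" for \<delta>
  proof -
    obtain s where s: "s \<in> {t-1..t}" "g s \<le> P + \<delta>"
      using exists_mean[OF gnn gint d, of t] unfolding P_def by blast
    obtain n where n: "\<And>a b. a \<le> -n \<Longrightarrow> n \<le> b \<Longrightarrow> \<bar>integral {a..b} (\<lambda>t. f t \<bullet> v t) - Q\<bar> \<le> \<delta>"
      using hk_tail[OF ifv d] unfolding Q_def by blast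
    have d2': "2 * \<delta> > 0" using d by simp
    obtain a where a: "a \<le> min s (-n)" "2 * (v a \<bullet> v' a) \<ge> - (2 * \<delta>)"
      using exists_left[OF gder gnn gint d2', of "min s (-n)"] by blast
    obtain b where b: "b \<ge> max t n" "2 * (v b \<bullet> v' b) \<le> 2 * \<delta>"
      using exists_right[OF gder gnn gint d2', of "max t n"] by blast
    have st: "s \<le> t" using s by simp
    have ab: "a \<le> b" using a b st by simp
    have ftc1: "((\<lambda>x. 2 * (v x \<bullet> v' x)) has_integral (g t - g s)) {s..t}"
      apply (rule fundamental_theorem_of_calculus[OF st])
      using gder by (auto simp: has_real_derivative_iff_has_vector_derivative intro: has_vector_derivative_at_within)
    have chain1: "g t - g s \<le> P + integral {a..b} (\<lambda>x. (norm (v' x))\<^sup>2)"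
    proof -
    have "g t - g s = integral {s..t} (\<lambda>x. 2 * (v x \<bullet> v' x))" using integral_unique[OF ftc1] by (rule sym)
    also have "\<dots> \<le> integral {s..t} (\<lambda>x. g x + (norm (v' x))\<^sup>2)"
    proof (rule integral_le)
      show "(\<lambda>x. 2 * (v x \<bullet> v' x)) integrable_on {s..t}" using ftc1 by blast
      show "(\<lambda>x. g x + (norm (v' x))\<^sup>2) integrable_on {s..t}"
        using leb_integrable_on[OF gint] intv' by (rule integrable_add)
      show "2 * (v x \<bullet> v' x) \<le> g x + (norm (v' x))\<^sup>2" for x
      proof -
        have "0 \<le> (norm (v x - v' x))\<^sup>2" by simp
        then show ?thesis unfolding g_def power2_norm_eq_inner
          by (simp add: inner_diff_left inner_diff_right inner_commute)
      qed
    qed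
    also have "\<dots> = integral {s..t} g + integral {s..t} (\<lambda>x. (norm (v' x))\<^sup>2)"
      by (rule integral_add[OF leb_integrable_on[OF gint] intv'])
    also have "integral {s..t} g \<le> P" unfolding P_def by (rule hk_le_leb(2)[OF gint gnn])
    also have "integral {s..t} (\<lambda>x. (norm (v' x))\<^sup>2) \<le> integral {a..b} (\<lambda>x. (norm (v' x))\<^sup>2)"
      by (rule integral_subset_le) (use a b s intv' in auto)
    finally show ?thesis by simp
    qed
    have ftc2: "((\<lambda>x. v'' x \<bullet> v x + (norm (v' x))\<^sup>2) has_integral (v' b \<bullet> v b - v' a \<bullet> v a)) {a..b}"
      apply (rule fundamental_theorem_of_calculus[OF ab])
      using inner_real_deriv[OF d2 d1]
      by (auto simp: has_real_derivative_iff_has_vector_derivative power2_norm_eq_inner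
          intro: has_vector_derivative_at_within)
    have int2: "(\<lambda>x. v'' x \<bullet> v x) integrable_on {a..b}"
      using integrable_diff[OF has_integral_integrable[OF ftc2] intv'[of a b]] by simp
    have intfv: "(\<lambda>x. f x \<bullet> v x) integrable_on {a..b}" by (rule leb_integrable_on[OF ifv])
    have intLg: "(\<lambda>x. L0 * g x) integrable_on {a..b}"
      using integrable_on_cmult_left[OF leb_integrable_on[OF gint], where c=L0] by simp
    have chain2: "integral {a..b} (\<lambda>x. (norm (v' x))\<^sup>2) \<le> 2 * \<delta> + (L0 * P + (Q + \<delta>))"
    proof -
    have "integral {a..b} (\<lambda>x. (norm (v' x))\<^sup>2) = (v' b \<bullet> v b - v' a \<bullet> v a) + integral {a..b} (\<lambda>x. - (v'' x \<bullet> v x))"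
    proof -
      have "integral {a..b} (\<lambda>x. v'' x \<bullet> v x + (norm (v' x))\<^sup>2) = integral {a..b} (\<lambda>x. v'' x \<bullet> v x) + integral {a..b} (\<lambda>x. (norm (v' x))\<^sup>2)"
        by (rule integral_add[OF int2 intv'])
      moreover have "integral {a..b} (\<lambda>x. v'' x \<bullet> v x + (norm (v' x))\<^sup>2) = v' b \<bullet> v b - v' a \<bullet> v a"
        using ftc2 by (rule integral_unique)
      moreover have "integral {a..b} (\<lambda>x. - (v'' x \<bullet> v x)) = - integral {a..b} (\<lambda>x. v'' x \<bullet> v x)"
        by (rule integral_neg)
      ultimately show ?thesis by linarith
    qed
    also have "v' b \<bullet> v b - v' a \<bullet> v a \<le> 2 * \<delta>" using a(2) b(2) by (simp add: inner_commute)
    also have "integral {a..b} (\<lambda>x. - (v'' x \<bullet> v x)) \<le> integral {a..b} (\<lambda>x. L0 * g x + f x \<bullet> v x)"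
      apply (rule integral_le)
      using integrable_neg[OF int2] apply simp
      using integrable_add[OF intLg intfv] apply simp
      using ineq unfolding g_def by simp
    also have "\<dots> = L0 * integral {a..b} g + integral {a..b} (\<lambda>x. f x \<bullet> v x)"
      using integral_add[OF intLg intfv] by simp
    also have "integral {a..b} g \<le> P" unfolding P_def by (rule hk_le_leb(2)[OF gint gnn])
    also have "integral {a..b} (\<lambda>x. f x \<bullet> v x) \<le> Q + \<delta>" using n[of a b] a b by auto
    finally show ?thesis using L0 by (simp add: mult_left_mono)
    qed
    have "(2+L0)*P = 2*P + L0*P" by (simp add: algebra_simps)
    then show ?thesis using chain1 chain2 s d by linarith
  qed
  have "g t \<le> (2 + L0) * P + Q"
  proof (rule field_le_epsilon)
    fix e :: real assume "0 < e"
    then show "g t \<le> (2 + L0) * P + Q + e" using main[of "e/6"] by simp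
  qed
  then show ?thesis unfolding g_def P_def Q_def by simp
qed



lemma L2_meas: "u \<in> L2 \<Longrightarrow> u \<in> borel_measurable lebesgue" by (simp add: L2_def)
lemma L2_int: "u \<in> L2 \<Longrightarrow> integrable lebesgue (\<lambda>t. (norm (u t))\<^sup>2)" by (simp add: L2_def)

lemma L2_inner_int:
  fixes u w :: "real \<Rightarrow> real^'n"
  assumes "u \<in> L2" "w \<in> L2"
  shows "integrable lebesgue (\<lambda>t. u t \<bullet> w t)"
proof (rule Bochner_Integration.integrable_bound[where f="\<lambda>t. ((norm (u t))\<^sup>2 + (norm (w t))\<^sup>2) / 2"])
  show "integrable lebesgue (\<lambda>t. ((norm (u t))\<^sup>2 + (norm (w t))\<^sup>2) / 2)"
    using L2_int[OF assms(1)] L2_int[OF assms(2)] by simp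
  show "(\<lambda>t. u t \<bullet> w t) \<in> borel_measurable lebesgue"
    using L2_meas[OF assms(1)] L2_meas[OF assms(2)] by measurable
  show "AE x in lebesgue. norm (u x \<bullet> w x) \<le> norm (((norm (u x))\<^sup>2 + (norm (w x))\<^sup>2) / 2)"
  proof (rule AE_I2)
    fix x
    have "\<bar>u x \<bullet> w x\<bar> \<le> norm (u x) * norm (w x)" by (rule Cauchy_Schwarz_ineq2)
    also have "\<dots> \<le> ((norm (u x))\<^sup>2 + (norm (w x))\<^sup>2) / 2"
      using sum_squares_bound[of "norm (u x)" "norm (w x)"] by simp
    finally show "norm (u x \<bullet> w x) \<le> norm (((norm (u x))\<^sup>2 + (norm (w x))\<^sup>2) / 2)" by simp
  qed
qed

lemma L2_add:
  fixes u w :: "real \<Rightarrow> real^'n"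
  assumes "u \<in> L2" "w \<in> L2"
  shows "(\<lambda>t. u t + w t) \<in> L2"
proof -
  have eq: "(\<lambda>t. (norm (u t + w t))\<^sup>2) = (\<lambda>t. ((norm (u t))\<^sup>2 + (norm (w t))\<^sup>2) + 2 * (u t \<bullet> w t))"
    by (simp add: power2_norm_eq_inner inner_add_left inner_add_right inner_commute fun_eq_iff)
  have "integrable lebesgue (\<lambda>t. (norm (u t + w t))\<^sup>2)"
    unfolding eq using L2_int[OF assms(1)] L2_int[OF assms(2)] L2_inner_int[OF assms] by simp
  moreover have "(\<lambda>t. u t + w t) \<in> borel_measurable lebesgue"
    using L2_meas[OF assms(1)] L2_meas[OF assms(2)] by measurable
  ultimately show ?thesis by (simp add: L2_def)
qed

lemma L2_scale:
  fixes u :: "real \<Rightarrow> real^'n"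
  assumes "u \<in> L2"
  shows "(\<lambda>t. c *\<^sub>R u t) \<in> L2"
proof -
  have "integrable lebesgue (\<lambda>t. (norm (c *\<^sub>R u t))\<^sup>2)"
    using L2_int[OF assms] by (simp add: power_mult_distrib)
  moreover have "(\<lambda>t. c *\<^sub>R u t) \<in> borel_measurable lebesgue"
    using L2_meas[OF assms] by measurable
  ultimately show ?thesis by (simp add: L2_def)
qed

lemma L2_diff:
  fixes u w :: "real \<Rightarrow> real^'n"
  assumes "u \<in> L2" "w \<in> L2"
  shows "(\<lambda>t. u t - w t) \<in> L2"
  using L2_add[OF assms(1) L2_scale[OF assms(2), of "-1"]] by simp

lemma L2_zero: "(\<lambda>t. 0 :: real^'n) \<in> L2" by (simp add: L2_def)

lemma L2_sum:
  fixes e :: "nat \<Rightarrow> real \<Rightarrow> real^'n"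
  assumes "\<And>k. e k \<in> L2"
  shows "(\<lambda>t. \<Sum>k<K. a k *\<^sub>R e k t) \<in> L2"
proof (induction K)
  case 0 then show ?case using L2_zero by simp
next
  case (Suc K) then show ?case using L2_add[OF Suc L2_scale[OF assms[of K], of "a K"]] by simp
qed

lemma l2_add_left:
  fixes u w z :: "real \<Rightarrow> real^'n"
  assumes "u \<in> L2" "w \<in> L2" "z \<in> L2"
  shows "l2_inner (\<lambda>t. u t + w t) z = l2_inner u z + l2_inner w z"
  unfolding l2_inner_def using L2_inner_int[OF assms(1,3)] L2_inner_int[OF assms(2,3)]
  by (simp add: inner_add_left)

lemma l2_scale_left: "l2_inner (\<lambda>t. c *\<^sub>R u t) z = c * l2_inner u z"
  unfolding l2_inner_def by simp

lemma l2_diff_left: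
  fixes u w z :: "real \<Rightarrow> real^'n"
  assumes "u \<in> L2" "w \<in> L2" "z \<in> L2"
  shows "l2_inner (\<lambda>t. u t - w t) z = l2_inner u z - l2_inner w z"
  unfolding l2_inner_def using L2_inner_int[OF assms(1,3)] L2_inner_int[OF assms(2,3)]
  by (simp add: inner_diff_left)

lemma l2_commute: "l2_inner u w = l2_inner w u"
  unfolding l2_inner_def by (simp add: inner_commute)

lemma l2_sum_left:
  fixes e :: "nat \<Rightarrow> real \<Rightarrow> real^'n"
  assumes "\<And>k. e k \<in> L2" "z \<in> L2"
  shows "l2_inner (\<lambda>t. \<Sum>k<K. a k *\<^sub>R e k t) z = (\<Sum>k<K. a k * l2_inner (e k) z)"
proof (induction K)
  case 0 then show ?case by (simp add: l2_inner_def)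
next
  case (Suc K)
  have "l2_inner (\<lambda>t. \<Sum>k<Suc K. a k *\<^sub>R e k t) z
      = l2_inner (\<lambda>t. (\<Sum>k<K. a k *\<^sub>R e k t) + a K *\<^sub>R e K t) z" by simp
  also have "\<dots> = l2_inner (\<lambda>t. \<Sum>k<K. a k *\<^sub>R e k t) z + l2_inner (\<lambda>t. a K *\<^sub>R e K t) z"
    by (rule l2_add_left[OF L2_sum[OF assms(1)] L2_scale[OF assms(1)] assms(2)])
  finally show ?case using Suc by (simp add: l2_scale_left)
qed

lemma l2_sum_onb:
  fixes e :: "nat \<Rightarrow> real \<Rightarrow> real^'n"
  assumes "\<And>k. e k \<in> L2" and on: "\<And>j k. l2_inner (e j) (e k) = (if j = k then 1 else 0)"
  shows "l2_inner (\<lambda>t. \<Sum>k<K. a k *\<^sub>R e k t) (e j) = (if j < K then a j else 0)"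
proof -
  have "l2_inner (\<lambda>t. \<Sum>k<K. a k *\<^sub>R e k t) (e j) = (\<Sum>k<K. a k * (if k = j then 1 else 0))"
    using l2_sum_left[OF assms(1) assms(1)] on by simp
  also have "\<dots> = (if j < K then a j else 0)"
    by (simp add: if_distrib[of "\<lambda>x. _ * x"] sum.delta cong: if_cong)
  finally show ?thesis .
qed

lemma l2_sum_sum:
  fixes e :: "nat \<Rightarrow> real \<Rightarrow> real^'n"
  assumes "\<And>k. e k \<in> L2" and on: "\<And>j k. l2_inner (e j) (e k) = (if j = k then 1 else 0)"
  shows "l2_inner (\<lambda>t. \<Sum>k<K. a k *\<^sub>R e k t) (\<lambda>t. \<Sum>k<K. b k *\<^sub>R e k t) = (\<Sum>k<K. a k * b k)"
proof -
  have "l2_inner (\<lambda>t. \<Sum>k<K. a k *\<^sub>R e k t) (\<lambda>t. \<Sum>k<K. b k *\<^sub>R e k t)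
     = (\<Sum>k<K. a k * l2_inner (e k) (\<lambda>t. \<Sum>k<K. b k *\<^sub>R e k t))"
    by (rule l2_sum_left[OF assms(1) L2_sum[OF assms(1)]])
  also have "\<dots> = (\<Sum>k<K. a k * b k)"
    by (rule sum.cong) (auto simp: l2_commute[of "e _"] l2_sum_onb[OF assms])
  finally show ?thesis .
qed

lemma vd_lincomb:
  assumes "\<And>k t. (e k has_vector_derivative e1 k t) (at t)"
  shows "((\<lambda>t. \<Sum>k<K. c k *\<^sub>R e k t) has_vector_derivative (\<Sum>k<K. c k *\<^sub>R e1 k t)) (at t)"
  by (intro has_vector_derivative_sum bounded_linear.has_vector_derivative[OF bounded_linear_scaleR_right] assms)



lemma spectral_gap:
  fixes lam :: "nat \<Rightarrow> real"
  assumes m: "mono lam" and pos: "lam (nbar lam) > 0" and k: "lam k > 0"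
  shows "lam (nbar lam) \<le> lam k"
proof -
  define S where "S = {k. lam k \<le> 0}"
  have fin: "finite S"
  proof (rule ccontr)
    assume inf: "infinite S"
    then have "nbar lam = 0" unfolding nbar_def S_def by simp
    moreover obtain j where "j \<in> S" using inf by (metis finite.emptyI ex_in_conv)
    ultimately show False using pos m unfolding S_def by (metis mem_Collect_eq mono_def zero_le not_less order_trans)
  qed
  have "nbar lam \<le> k"
  proof (rule ccontr)
    assume "\<not> nbar lam \<le> k"
    then have lt: "k < card S" unfolding nbar_def S_def by simp
    have "S \<subseteq> {..<k}"
    proof
      fix j assume j: "j \<in> S"
      show "j \<in> {..<k}"
      proof (rule ccontr)
        assume "j \<notin> {..<k}" then have "k \<le> j" by simp
        then have "lam k \<le> lam j" using m by (simp add: mono_def)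
        then show False using j k unfolding S_def by simp
      qed
    qed
    then have "card S \<le> k" using card_mono[of "{..<k}" S] by simp
    then show False using lt by simp
  qed
  then show ?thesis using m by (simp add: mono_def)
qed

lemma mv_sum: "A *v (\<Sum>k<(K::nat). c k *\<^sub>R x k) = (\<Sum>k<K. c k *\<^sub>R (A *v x k))" for A :: "real^'n^'n"
  by (induction K) (simp_all add: matrix_vector_right_distrib matrix_vector_mult_scaleR)

lemma vK_bound:
  fixes L :: "real \<Rightarrow> real^'n^'n" and e e1 e2 :: "nat \<Rightarrow> real \<Rightarrow> real^'n"
  assumes d: "\<And>k t. (e k has_vector_derivative e1 k t) (at t)"
             "\<And>k t. (e1 k has_vector_derivative e2 k t) (at t)"
    and eq: "\<And>k t. - e2 k t + L t *v e k t = lam k *\<^sub>R e k t"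
    and eL2: "\<And>k. e k \<in> L2"
    and on: "\<And>j k. l2_inner (e j) (e k) = (if j = k then 1 else 0)"
    and L0: "L0 \<ge> 0" "\<And>t x. (L t *v x) \<bullet> x \<ge> - L0 * (norm x)\<^sup>2"
  shows "(norm (\<Sum>k<K. c k *\<^sub>R e k t))\<^sup>2 \<le> (2 + L0) * (\<Sum>k<K. c k * c k) + (\<Sum>k<K. (lam k * c k) * c k)"
proof -
  define v where "v = (\<lambda>t. \<Sum>k<K. c k *\<^sub>R e k t)"
  define f where "f = (\<lambda>t. \<Sum>k<K. (lam k * c k) *\<^sub>R e k t)"
  have vL2: "v \<in> L2" unfolding v_def by (rule L2_sum[OF eL2])
  have fL2: "f \<in> L2" unfolding f_def by (rule L2_sum[OF eL2])
  have e2eq: "e2 k t = L t *v e k t - lam k *\<^sub>R e k t" for k t using eq[of k t] by (simp add: algebra_simps)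
  have v2: "(\<Sum>k<K. c k *\<^sub>R e2 k t) = L t *v v t - f t" for t
    unfolding v_def f_def mv_sum e2eq
    by (simp add: scaleR_diff_right sum_subtractf scaleR_scaleR mult.commute)
  have "(norm (v t))\<^sup>2 \<le> (2 + L0) * (\<integral>t. (norm (v t))\<^sup>2 \<partial>lebesgue) + (\<integral>t. f t \<bullet> v t \<partial>lebesgue)"
  proof (rule core[where v'="\<lambda>t. \<Sum>k<K. c k *\<^sub>R e1 k t" and v''="\<lambda>t. \<Sum>k<K. c k *\<^sub>R e2 k t"])
    show "(v has_vector_derivative (\<Sum>k<K. c k *\<^sub>R e1 k t)) (at t)" for t
      unfolding v_def by (rule vd_lincomb[OF d(1)])
    show "((\<lambda>t. \<Sum>k<K. c k *\<^sub>R e1 k t) has_vector_derivative (\<Sum>k<K. c k *\<^sub>R e2 k t)) (at t)" for t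
      by (rule vd_lincomb[OF d(2)])
    show "- ((\<Sum>k<K. c k *\<^sub>R e2 k t) \<bullet> v t) \<le> L0 * (norm (v t))\<^sup>2 + f t \<bullet> v t" for t
      unfolding v2 using L0(2)[where t=t and x="v t"] by (simp add: inner_diff_left)
    show "integrable lebesgue (\<lambda>t. (norm (v t))\<^sup>2)" by (rule L2_int[OF vL2])
    show "integrable lebesgue (\<lambda>t. f t \<bullet> v t)" by (rule L2_inner_int[OF fL2 vL2])
    show "L0 \<ge> 0" by fact
  qed
  moreover have "(\<integral>t. (norm (v t))\<^sup>2 \<partial>lebesgue) = (\<Sum>k<K. c k * c k)"
    using l2_sum_sum[OF eL2 on, of c K c] unfolding l2_inner_def v_def by (simp add: power2_norm_eq_inner)
  moreover have "(\<integral>t. f t \<bullet> v t \<partial>lebesgue) = (\<Sum>k<K. (lam k * c k) * c k)"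
    using l2_sum_sum[OF eL2 on, of "\<lambda>k. lam k * c k" K c] unfolding l2_inner_def v_def f_def by simp
  ultimately show ?thesis unfolding v_def by simp
qed



theorem lemma2p4:
  fixes L :: "real \<Rightarrow> real^'n^'n"
    and W :: "real \<Rightarrow> real^'n \<Rightarrow> real"
    and gradW :: "real \<Rightarrow> real^'n \<Rightarrow> real^'n"
    and lam :: "nat \<Rightarrow> real"
    and e :: "nat \<Rightarrow> real \<Rightarrow> real^'n"
    and b1 b2 b3 r1 r2 sigma0 eps0 rinf \<mu> :: real
  assumes L_cont: "continuous_on UNIV L"
    and L_sym: "\<And>t. transpose (L t) = L t"
    and W_C1: "\<exists>W'. (\<forall>p. ((\<lambda>p. W (fst p) (snd p)) has_derivative blinfun_apply (W' p)) (at p))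
                     \<and> continuous_on UNIV W'"
    and gradW: "\<And>t x. (W t has_derivative (\<lambda>h. gradW t x \<bullet> h)) (at x)"
    and L1: "\<exists>alpha0 M. alpha0 > 1 \<and> M > 0 \<and>
              ((\<lambda>R. emeasure lebesgue {t. \<bar>t\<bar> \<ge> R \<and> lmin L t \<le> M * \<bar>t\<bar> * (ln \<bar>t\<bar>) powr alpha0})
                 \<longlongrightarrow> 0) at_top"
    and L2: "\<exists>L0>0. \<forall>t x. (L t *v x) \<bullet> x \<ge> - L0 * (norm x)\<^sup>2"
    and onb: "eigen_onb L lam e"
    and W1: "\<And>t. W t 0 = 0" "\<And>t x. norm (gradW t x) \<le> b1 * norm x"
    and W2: "b2 > 0" "r1 > 0" "\<mu> > 1"
            "\<And>t x. norm x \<ge> r1 \<Longrightarrow> 2 * W t x - gradW t x \<bullet> x \<ge> b2 * norm x powr \<mu>"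
    and W3: "b3 > 0" "\<And>t x. norm x < r1 \<Longrightarrow> 2 * W t x - gradW t x \<bullet> x \<ge> - b3 * norm x"
    and W4: "r2 > 0" "sigma0 > 0"
            "\<And>t x. norm x \<le> r2 \<Longrightarrow> \<bar>W t x\<bar> \<le> (lam (nbar lam) - sigma0) / 2 * (norm x)\<^sup>2"
    and W5: "eps0 > 0" "rinf > 0"
            "\<And>t x. norm x \<ge> rinf \<Longrightarrow> W t x \<ge> (lam (nbar lam) / 2 + eps0) * (norm x)\<^sup>2"
    and W6: "\<And>t x. W t x \<ge> 0"
  shows "\<exists>\<alpha>>0. \<exists>\<rho>>0. \<forall>u\<in>Eplus lam e. Enorm lam e u = \<rho> \<longrightarrow> Ifun lam e W u \<ge> \<alpha>"
proof -
  obtain L0 where L0: "L0 > 0" "\<And>t x. (L t *v x) \<bullet> x \<ge> - L0 * (norm x)\<^sup>2" using L2 by blast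
  have m: "mono lam" and eig: "\<And>k. is_eigenfun L (lam k) (e k)"
    and on: "\<And>j k. l2_inner (e j) (e k) = (if j = k then 1 else 0)"
    and pars: "\<And>u. u \<in> L2 \<Longrightarrow> (\<lambda>k. (l2_inner u (e k))\<^sup>2) sums l2_inner u u"
    using onb unfolding eigen_onb_def by auto
  have eL2: "\<And>k. e k \<in> L2" using eig unfolding is_eigenfun_def by auto
  have "\<forall>k. \<exists>p. \<forall>t. (e k has_vector_derivative fst p t) (at t) \<and> (fst p has_vector_derivative snd p t) (at t)
          \<and> - snd p t + L t *v e k t = lam k *\<^sub>R e k t"
    using eig unfolding is_eigenfun_def by fastforce
  then obtain p where p: "\<And>k t. (e k has_vector_derivative fst (p k) t) (at t) \<and> (fst (p k) has_vector_derivative snd (p k) t) (at t)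
          \<and> - snd (p k) t + L t *v e k t = lam k *\<^sub>R e k t"
    by metis
  define e1 where "e1 = (\<lambda>k. fst (p k))"
  define e2 where "e2 = (\<lambda>k. snd (p k))"
  have d1: "\<And>k t. (e k has_vector_derivative e1 k t) (at t)" using p unfolding e1_def by blast
  have d2: "\<And>k t. (e1 k has_vector_derivative e2 k t) (at t)" using p unfolding e1_def e2_def by blast
  have eqe: "\<And>k t. - e2 k t + L t *v e k t = lam k *\<^sub>R e k t" using p unfolding e2_def by blast
  define lam0 where "lam0 = lam (nbar lam)"
  define A where "A = (lam0 - sigma0) / 2"
  define x0 :: "real^'n" where "x0 = r2 *\<^sub>R axis undefined 1"
  have nx0: "norm x0 = r2" unfolding x0_def using W4(1) by simp
  have "\<bar>W 0 x0\<bar> \<le> A * (norm x0)\<^sup>2" using W4(3)[of x0 0] nx0 unfolding A_def lam0_def by simp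
  then have "0 \<le> A * r2\<^sup>2" using nx0 by (meson abs_ge_zero order_trans)
  then have A0: "A \<ge> 0" using W4(1) by (simp add: zero_le_mult_iff)
  have lam0pos: "lam0 > 0" using A0 W4(2) unfolding A_def by simp
  have gap: "\<And>k. lam k > 0 \<Longrightarrow> lam0 \<le> lam k"
    using spectral_gap[OF m] lam0pos unfolding lam0_def by blast
  define C where "C = (2 + L0) / lam0 + 1"
  have Cpos: "C > 0" unfolding C_def using L0 lam0pos by (simp add: add_pos_nonneg)
  define \<rho> where "\<rho> = r2 / sqrt C"
  define \<alpha> where "\<alpha> = sigma0 * \<rho>\<^sup>2 / (2 * lam0)"
  have rpos: "\<rho> > 0" unfolding \<rho>_def using Cpos W4(1) by simp
  have apos: "\<alpha> > 0" unfolding \<alpha>_def using rpos W4(2) lam0pos by simp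
  have Crho: "C * \<rho>\<^sup>2 = r2\<^sup>2" unfolding \<rho>_def using Cpos by (simp add: power_divide)
  have "\<forall>u\<in>Eplus lam e. Enorm lam e u = \<rho> \<longrightarrow> Ifun lam e W u \<ge> \<alpha>"
  proof (intro ballI impI)
    fix u assume uE: "u \<in> Eplus lam e" and nu: "Enorm lam e u = \<rho>"
    define c where "c = (\<lambda>k. l2_inner u (e k))"
    have cc: "\<And>k. l2_inner u (e k) = c k" unfolding c_def by simp
    have uL2: "u \<in> L2" and summ: "summable (\<lambda>k. \<bar>lam k\<bar> * (c k)\<^sup>2)"
      and c0: "\<And>k. lam k \<le> 0 \<Longrightarrow> c k = 0"
      using uE unfolding Eplus_def Espace_def c_def by auto
    have t1: "(if lam k = 0 then 1 else \<bar>lam k\<bar>) * (c k)\<^sup>2 = \<bar>lam k\<bar> * (c k)\<^sup>2" for k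
      using c0[of k] by auto
    have t2: "(if lam k > 0 then lam k else 0) * (c k)\<^sup>2 = \<bar>lam k\<bar> * (c k)\<^sup>2" for k
      using c0[of k] by auto
    have t3: "(if lam k < 0 then - lam k else 0) * (c k)\<^sup>2 = 0" for k
      using c0[of k] by auto
    have t4: "lam k * c k * c k = \<bar>lam k\<bar> * (c k)\<^sup>2" for k
      using c0[of k] by (cases "lam k \<le> 0") (auto simp: power2_eq_square)
    have t5: "(c k)\<^sup>2 \<le> \<bar>lam k\<bar> * (c k)\<^sup>2 / lam0" for k
    proof (cases "lam k \<le> 0")
      case True then show ?thesis using c0[of k] by simp
    next
      case False
      then have "lam0 \<le> \<bar>lam k\<bar>" using gap[of k] by simp
      then have "lam0 * (c k)\<^sup>2 \<le> \<bar>lam k\<bar> * (c k)\<^sup>2" by (simp add: mult_right_mono)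
      then show ?thesis using lam0pos by (simp add: field_simps)
    qed
    define R where "R = (\<Sum>k. \<bar>lam k\<bar> * (c k)\<^sup>2)"
    have R0: "R \<ge> 0" unfolding R_def by (rule suminf_nonneg[OF summ]) simp
    have "sqrt R = \<rho>" using nu unfolding Enorm_def R_def cc t1 .
    then have Rr: "R = \<rho>\<^sup>2" using R0 by auto
    have If: "Ifun lam e W u = R / 2 - (\<integral>t. W t (u t) \<partial>lebesgue)"
      unfolding Ifun_def cc t2 t3 R_def by simp
    have summ5: "summable (\<lambda>k. \<bar>lam k\<bar> * (c k)\<^sup>2 / lam0)" using summ by (rule summable_divide)
    have parsu: "(\<lambda>k. (c k)\<^sup>2) sums l2_inner u u" unfolding c_def by (rule pars[OF uL2])
    have nu2: "(\<integral>t. (norm (u t))\<^sup>2 \<partial>lebesgue) = l2_inner u u"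
      unfolding l2_inner_def by (simp add: power2_norm_eq_inner)
    have Pu: "(\<integral>t. (norm (u t))\<^sup>2 \<partial>lebesgue) \<le> R / lam0"
    proof -
      have "l2_inner u u = (\<Sum>k. (c k)\<^sup>2)" using parsu by (rule sums_unique)
      also have "\<dots> \<le> (\<Sum>k. \<bar>lam k\<bar> * (c k)\<^sup>2 / lam0)"
        by (rule suminf_le[OF t5 sums_summable[OF parsu] summ5])
      also have "\<dots> = R / lam0" unfolding R_def by (rule suminf_divide[OF summ])
      finally show ?thesis using nu2 by simp
    qed
    have vb: "norm (\<Sum>k<K. c k *\<^sub>R e k t) \<le> r2" for K t
    proof -
      have "(norm (\<Sum>k<K. c k *\<^sub>R e k t))\<^sup>2 \<le> (2 + L0) * (\<Sum>k<K. c k * c k) + (\<Sum>k<K. (lam k * c k) * c k)"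
        by (rule vK_bound[OF d1 d2 eqe eL2 on _ L0(2)]) (use L0 in simp)
      also have "(\<Sum>k<K. (lam k * c k) * c k) = (\<Sum>k<K. \<bar>lam k\<bar> * (c k)\<^sup>2)" using t4 by simp
      also have "\<dots> \<le> R" unfolding R_def by (rule sum_le_suminf[OF summ]) auto
      also have "(\<Sum>k<K. c k * c k) \<le> (\<Sum>k<K. \<bar>lam k\<bar> * (c k)\<^sup>2 / lam0)"
        by (rule sum_mono) (use t5 in \<open>simp add: power2_eq_square\<close>)
      also have "\<dots> \<le> R / lam0" unfolding R_def suminf_divide[OF summ, symmetric]
        by (rule sum_le_suminf[OF summ5]) (use lam0pos in auto)
      finally have "(norm (\<Sum>k<K. c k *\<^sub>R e k t))\<^sup>2 \<le> (2 + L0) * (R / lam0) + R"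
        using L0 by (simp add: mult_left_mono)
      also have "\<dots> = C * R" unfolding C_def by (simp add: algebra_simps add_divide_distrib)
      also have "\<dots> = r2\<^sup>2" using Crho Rr by simp
      finally show ?thesis by (rule power2_le_imp_le) (use W4(1) in simp)
    qed
    define S where "S = (\<Sum>k. (c k)\<^sup>2)"
    have dist: "(\<integral>t. (norm (u t - (\<Sum>k<K. c k *\<^sub>R e k t)))\<^sup>2 \<partial>lebesgue) = S - (\<Sum>k<K. (c k)\<^sup>2)" for K
    proof -
      define w where "w = (\<lambda>t. u t - (\<Sum>k<K. c k *\<^sub>R e k t))"
      have wL2: "w \<in> L2" unfolding w_def by (rule L2_diff[OF uL2 L2_sum[OF eL2]])
      have wc: "l2_inner w (e j) = c j - (if j < K then c j else 0)" for j
      proof -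
        have "l2_inner w (e j) = l2_inner u (e j) - l2_inner (\<lambda>t. \<Sum>k<K. c k *\<^sub>R e k t) (e j)"
          unfolding w_def by (rule l2_diff_left[OF uL2 L2_sum[OF eL2] eL2])
        also have "\<dots> = c j - (if j < K then c j else 0)"
          unfolding l2_sum_onb[OF eL2 on] cc ..
        finally show ?thesis .
      qed
      have wsq: "(l2_inner w (e j))\<^sup>2 = (c j)\<^sup>2 - (if j \<in> {..<K} then (c j)\<^sup>2 else 0)" for j
        unfolding wc by (simp add: power2_eq_square)
      have s1: "(\<lambda>j. (c j)\<^sup>2 - (if j \<in> {..<K} then (c j)\<^sup>2 else 0)) sums (S - (\<Sum>k<K. (c k)\<^sup>2))"
        unfolding S_def by (rule sums_diff[OF summable_sums[OF sums_summable[OF parsu]] sums_If_finite_set]) simp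
      have s2: "(\<lambda>j. (c j)\<^sup>2 - (if j \<in> {..<K} then (c j)\<^sup>2 else 0)) sums l2_inner w w"
        using pars[OF wL2] unfolding wsq .
      have "l2_inner w w = S - (\<Sum>k<K. (c k)\<^sup>2)" using sums_unique2[OF s2 s1] .
      moreover have "l2_inner w w = (\<integral>t. (norm (w t))\<^sup>2 \<partial>lebesgue)"
        unfolding l2_inner_def by (simp add: power2_norm_eq_inner)
      ultimately show ?thesis unfolding w_def by simp
    qed
    define h where "h = (\<lambda>t. (max (norm (u t) - r2) 0)\<^sup>2)"
    have umeas: "u \<in> borel_measurable lebesgue" by (rule L2_meas[OF uL2])
    have hle_u: "h t \<le> (norm (u t))\<^sup>2" for t
      unfolding h_def using W4(1) by (intro power_mono) auto
    have hint: "integrable lebesgue h"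
    proof (rule Bochner_Integration.integrable_bound[where f="\<lambda>t. (norm (u t))\<^sup>2"])
      show "integrable lebesgue (\<lambda>t. (norm (u t))\<^sup>2)" by (rule L2_int[OF uL2])
      show "h \<in> borel_measurable lebesgue" unfolding h_def using umeas by measurable
      show "AE x in lebesgue. norm (h x) \<le> norm ((norm (u x))\<^sup>2)"
        using hle_u by (auto simp: h_def)
    qed
    have hnn: "\<And>t. h t \<ge> 0" unfolding h_def by simp
    have hle: "integral\<^sup>L lebesgue h \<le> S - (\<Sum>k<K. (c k)\<^sup>2)" for K
    proof -
      have "integral\<^sup>L lebesgue h \<le> (\<integral>t. (norm (u t - (\<Sum>k<K. c k *\<^sub>R e k t)))\<^sup>2 \<partial>lebesgue)"
      proof (rule integral_mono[OF hint L2_int[OF L2_diff[OF uL2 L2_sum[OF eL2]]]])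
        fix t
        have "norm (u t) \<le> norm (u t - (\<Sum>k<K. c k *\<^sub>R e k t)) + norm (\<Sum>k<K. c k *\<^sub>R e k t)"
          using norm_triangle_ineq[of "u t - (\<Sum>k<K. c k *\<^sub>R e k t)" "\<Sum>k<K. c k *\<^sub>R e k t"] by simp
        then have "max (norm (u t) - r2) 0 \<le> norm (u t - (\<Sum>k<K. c k *\<^sub>R e k t))"
          using vb[where K=K and t=t] by simp
        then show "h t \<le> (norm (u t - (\<Sum>k<K. c k *\<^sub>R e k t)))\<^sup>2"
          unfolding h_def by (intro power_mono) auto
      qed
      then show ?thesis using dist[of K] by simp
    qed
    have lim: "(\<lambda>K. S - (\<Sum>k<K. (c k)\<^sup>2)) \<longlonglongrightarrow> S - S"
      unfolding S_def by (intro tendsto_diff tendsto_const summable_LIMSEQ sums_summable[OF parsu])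
    have "integral\<^sup>L lebesgue h \<le> S - S"
      by (rule LIMSEQ_le_const[OF lim]) (use hle in blast)
    then have "integral\<^sup>L lebesgue h = 0" using Bochner_Integration.integral_nonneg[of lebesgue h] hnn by fastforce
    then have "AE t in lebesgue. h t = 0" using integral_nonneg_eq_0_iff_AE[OF hint] hnn by simp
    then have aeu: "AE t in lebesgue. norm (u t) \<le> r2"
      by eventually_elim (auto simp: h_def max_def split: if_splits)
    have Wb: "(\<integral>t. W t (u t) \<partial>lebesgue) \<le> A * (\<integral>t. (norm (u t))\<^sup>2 \<partial>lebesgue)"
    proof (cases "integrable lebesgue (\<lambda>t. W t (u t))")
      case True
      have "(\<integral>t. W t (u t) \<partial>lebesgue) \<le> (\<integral>t. A * (norm (u t))\<^sup>2 \<partial>lebesgue)"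
      proof (rule integral_mono_AE[OF True])
        show "integrable lebesgue (\<lambda>t. A * (norm (u t))\<^sup>2)" using L2_int[OF uL2] by simp
        show "AE t in lebesgue. W t (u t) \<le> A * (norm (u t))\<^sup>2"
          using aeu
        proof eventually_elim
          case (elim t)
          then have "\<bar>W t (u t)\<bar> \<le> A * (norm (u t))\<^sup>2" using W4(3)[of "u t" t] unfolding A_def lam0_def by simp
          then show ?case by simp
        qed
      qed
      then show ?thesis by simp
    next
      case False
      then have "(\<integral>t. W t (u t) \<partial>lebesgue) = 0" by (rule not_integrable_integral_eq)
      then show ?thesis using A0 by simp
    qed
    have "A * (\<integral>t. (norm (u t))\<^sup>2 \<partial>lebesgue) \<le> A * (R / lam0)"
      using Pu A0 by (rule mult_left_mono)
    then have "Ifun lam e W u \<ge> R / 2 - A * (R / lam0)" using If Wb by simp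
    moreover have "R / 2 - A * (R / lam0) = \<alpha>"
      unfolding A_def \<alpha>_def Rr[symmetric] using lam0pos by (simp add: field_simps)
    ultimately show "Ifun lam e W u \<ge> \<alpha>" by simp
  qed
  then show ?thesis using apos rpos by blast
qed

end
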